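(* Every partition $\pi\in\mathcal P$ is first-order definable in $\mathbf Y^*=\langle\mathcal P,\le,[1]+[1]\rangle$, i.e. for each $\pi$ there is a first-order formula $\phi_\pi(x)$ in the language $\{\le,[1]+[1]\}$ satisfied in $\mathbf Y^*$ exactly by $\pi$. Consequently, the conjugation map $\pi\mapsto\pi^\partial$ is the unique nontrivial automorphism of Young's lattice $\mathbf Y=\langle\mathcal P,\le\rangle$.
   Context: $\mathcal P$ is the set of all integer partitions, including the empty partition $\emptyset$; a partition is a nonincreasing finite sequence $(n_1,\dots,n_t)$ of positive integers. $[1]+[1]$ denotes the partition $(1,1)$. Young's lattice is $\mathbf Y=\langle\mathcal P,\le\rangle$ where $(s_1,\dots,s_r)\le(n_1,\dots,n_t)$ iff $r\le t$ and $s_i\le n_i$ for all $i\le r$ (containment of Young diagrams). $\mathbf Y^*$ is $\mathbf Y$ expanded by a constant symbol interpreted as $(1,1)$. The conjugate $\pi^\partial$ of $\pi$ is the partition whose Young diagram is the transpose of that of $\pi$. *)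

theory Defs
  imports Main
begin

definition partitions :: "nat list set" where
  "partitions = {xs. sorted_wrt (\<ge>) xs \<and> (\<forall>x\<in>set xs. 0 < x)}"

definition young_le :: "nat list \<Rightarrow> nat list \<Rightarrow> bool" where
  "young_le s n \<longleftrightarrow> length s \<le> length n \<and> (\<forall>i<length s. s ! i \<le> n ! i)"

text \<open>The constant of Y*: the partition [1]+[1] = (1,1).\<close>

definition one_one :: "nat list" where
  "one_one = [1, 1]"

definition conjugate :: "nat list \<Rightarrow> nat list" where
  "conjugate p = map (\<lambda>j. length (filter (\<lambda>a. j < a) p)) [0..<(case p of [] \<Rightarrow> 0 | a # _ \<Rightarrow> a)]"

datatype trm = Var nat | Cst

datatype fm =
    FLe trm trm
  | FEq trm trm
  | FNeg fm
  | FConj fm fm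
  | FEx nat fm

fun trm_vars :: "trm \<Rightarrow> nat set" where
  "trm_vars (Var v) = {v}"
| "trm_vars Cst = {}"

fun free_vars :: "fm \<Rightarrow> nat set" where
  "free_vars (FLe s t) = trm_vars s \<union> trm_vars t"
| "free_vars (FEq s t) = trm_vars s \<union> trm_vars t"
| "free_vars (FNeg f) = free_vars f"
| "free_vars (FConj f g) = free_vars f \<union> free_vars g"
| "free_vars (FEx v f) = free_vars f - {v}"

fun trm_eval :: "(nat \<Rightarrow> nat list) \<Rightarrow> trm \<Rightarrow> nat list" where
  "trm_eval e (Var v) = e v"
| "trm_eval e Cst = one_one"

fun sat :: "(nat \<Rightarrow> nat list) \<Rightarrow> fm \<Rightarrow> bool" where
  "sat e (FLe s t) = young_le (trm_eval e s) (trm_eval e t)"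
| "sat e (FEq s t) = (trm_eval e s = trm_eval e t)"
| "sat e (FNeg f) = (\<not> sat e f)"
| "sat e (FConj f g) = (sat e f \<and> sat e g)"
| "sat e (FEx v f) = (\<exists>p\<in>partitions. sat (e(v := p)) f)"

definition young_aut :: "(nat list \<Rightarrow> nat list) \<Rightarrow> bool" where
  "young_aut f \<longleftrightarrow> bij_betw f partitions partitions \<and>
     (\<forall>x\<in>partitions. \<forall>y\<in>partitions. young_le x y \<longleftrightarrow> young_le (f x) (f y))"

end

theory Submission
  imports Defs
begin


definition valid :: "(nat \<Rightarrow> nat list) \<Rightarrow> bool" where
  "valid e \<longleftrightarrow> (\<forall>v. e v \<in> partitions)"

definition expresses :: "fm \<Rightarrow> (nat list \<Rightarrow> bool) \<Rightarrow> bool" where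
  "expresses \<phi> Q \<longleftrightarrow> free_vars \<phi> \<subseteq> {0} \<and> (\<forall>e. valid e \<longrightarrow> (sat e \<phi> \<longleftrightarrow> Q (e 0)))"

definition fat :: "nat \<Rightarrow> fm \<Rightarrow> fm" where
  "fat k \<phi> = FEx 0 (FConj (FEq (Var 0) (Var k)) \<phi>)"

definition FAll :: "nat \<Rightarrow> fm \<Rightarrow> fm" where "FAll v f = FNeg (FEx v (FNeg f))"
definition FImp :: "fm \<Rightarrow> fm \<Rightarrow> fm" where "FImp a b = FNeg (FConj a (FNeg b))"

lemma sat_FAll[simp]: "sat e (FAll v f) \<longleftrightarrow> (\<forall>p\<in>partitions. sat (e(v:=p)) f)"
  by (simp add: FAll_def)
lemma sat_FImp[simp]: "sat e (FImp a b) \<longleftrightarrow> (sat e a \<longrightarrow> sat e b)"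
  by (simp add: FImp_def)
lemma fv_FAll[simp]: "free_vars (FAll v f) = free_vars f - {v}" by (simp add: FAll_def)
lemma fv_FImp[simp]: "free_vars (FImp a b) = free_vars a \<union> free_vars b" by (simp add: FImp_def)

lemma valid_upd[simp]: "valid e \<Longrightarrow> p \<in> partitions \<Longrightarrow> valid (e(v:=p))"
  by (simp add: valid_def)

lemma fv_fat: "free_vars \<phi> \<subseteq> {0} \<Longrightarrow> free_vars (fat k \<phi>) \<subseteq> {k}"
  by (auto simp: fat_def)

lemma sat_fat: "expresses \<phi> Q \<Longrightarrow> valid e \<Longrightarrow> k \<noteq> 0 \<Longrightarrow> sat e (fat k \<phi>) \<longleftrightarrow> Q (e k)"
  unfolding fat_def expresses_def
  apply (simp)
  apply (subgoal_tac "e k \<in> partitions")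
   apply (auto simp: valid_def)
  done

lemma expresses_cong: "expresses \<phi> Q \<Longrightarrow> (\<And>x. x \<in> partitions \<Longrightarrow> Q x \<longleftrightarrow> Q' x) \<Longrightarrow> expresses \<phi> Q'"
  by (auto simp: expresses_def valid_def)

definition TT :: fm where "TT = FEq (Var 0) (Var 0)"
lemma ex_TT: "expresses TT (\<lambda>x. True)" by (simp add: expresses_def TT_def)

lemma ex_neg: "expresses \<phi> Q \<Longrightarrow> expresses (FNeg \<phi>) (\<lambda>x. \<not> Q x)"
  by (simp add: expresses_def)
lemma ex_conj: "expresses \<phi> Q \<Longrightarrow> expresses \<psi> R \<Longrightarrow> expresses (FConj \<phi> \<psi>) (\<lambda>x. Q x \<and> R x)"
  by (simp add: expresses_def)

definition gec :: fm where "gec = FLe Cst (Var 0)"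
lemma ex_gec: "expresses gec (\<lambda>x. young_le one_one x)" by (simp add: expresses_def gec_def)

definition lo :: "fm \<Rightarrow> fm" where "lo \<phi> = FEx 1 (FConj (fat 1 \<phi>) (FLe (Var 0) (Var 1)))"
definition go :: "fm \<Rightarrow> fm" where "go \<phi> = FEx 1 (FConj (fat 1 \<phi>) (FLe (Var 1) (Var 0)))"

lemma ex_lo: "expresses \<phi> (\<lambda>x. x = a) \<Longrightarrow> a \<in> partitions \<Longrightarrow> expresses (lo \<phi>) (\<lambda>x. young_le x a)"
  unfolding expresses_def[of "lo \<phi>"]
  apply (rule conjI)
  using fv_fat[of \<phi> 1] apply (auto simp: lo_def expresses_def)[1]
  apply (auto simp: lo_def sat_fat)
  done

lemma ex_go: "expresses \<phi> (\<lambda>x. x = a) \<Longrightarrow> a \<in> partitions \<Longrightarrow> expresses (go \<phi>) (\<lambda>x. young_le a x)"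
  unfolding expresses_def[of "go \<phi>"]
  apply (rule conjI)
  using fv_fat[of \<phi> 1] apply (auto simp: go_def expresses_def)[1]
  apply (auto simp: go_def sat_fat)
  done

definition least :: "fm \<Rightarrow> fm" where
  "least P = FConj P (FAll 1 (FImp (fat 1 P) (FLe (Var 0) (Var 1))))"
definition greatest :: "fm \<Rightarrow> fm" where
  "greatest P = FConj P (FAll 1 (FImp (fat 1 P) (FLe (Var 1) (Var 0))))"
definition minimal :: "fm \<Rightarrow> fm" where
  "minimal P = FConj P (FAll 1 (FImp (FConj (fat 1 P) (FLe (Var 1) (Var 0))) (FEq (Var 1) (Var 0))))"

lemma ex_least: "expresses P Q \<Longrightarrow>
   expresses (least P) (\<lambda>x. Q x \<and> (\<forall>y\<in>partitions. Q y \<longrightarrow> young_le x y))"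
  unfolding expresses_def[of "least P"]
  apply (rule conjI)
  using fv_fat[of P 1] apply (auto simp: least_def expresses_def)[1]
  apply (auto simp: least_def sat_fat)
  apply (auto simp: expresses_def)
  done

lemma ex_greatest: "expresses P Q \<Longrightarrow>
   expresses (greatest P) (\<lambda>x. Q x \<and> (\<forall>y\<in>partitions. Q y \<longrightarrow> young_le y x))"
  unfolding expresses_def[of "greatest P"]
  apply (rule conjI)
  using fv_fat[of P 1] apply (auto simp: greatest_def expresses_def)[1]
  apply (auto simp: greatest_def sat_fat)
  apply (auto simp: expresses_def)
  done

lemma ex_minimal: "expresses P Q \<Longrightarrow>
   expresses (minimal P) (\<lambda>x. Q x \<and> (\<forall>y\<in>partitions. Q y \<and> young_le y x \<longrightarrow> y = x))"
  unfolding expresses_def[of "minimal P"]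
  apply (rule conjI)
  using fv_fat[of P 1] apply (auto simp: minimal_def expresses_def)[1]
  apply (auto simp: minimal_def sat_fat)
  apply (auto simp: expresses_def)
  done




lemma part_mono: "p \<in> partitions \<Longrightarrow> i \<le> j \<Longrightarrow> j < length p \<Longrightarrow> p!j \<le> p!i"
  unfolding partitions_def
  by (metis (mono_tags, lifting) le_eq_less_or_eq mem_Collect_eq order_refl sorted_wrt_nth_less)

lemma part_pos: "p \<in> partitions \<Longrightarrow> i < length p \<Longrightarrow> 0 < p!i"
  unfolding partitions_def by auto

lemma yl_antisym: "young_le x y \<Longrightarrow> young_le y x \<Longrightarrow> x = y"
  unfolding young_le_def by (auto intro!: nth_equalityI intro: order.antisym)

lemma yl_refl: "young_le x x" by (simp add: young_le_def)

lemma nil_part[simp]: "[] \<in> partitions" by (simp add: partitions_def)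
lemma nil_le[simp]: "young_le [] x" by (simp add: young_le_def)
lemma le_nil[simp]: "young_le x [] \<longleftrightarrow> x = []" by (auto simp add: young_le_def)

lemma single_part[simp]: "[n] \<in> partitions \<longleftrightarrow> n > 0" by (simp add: partitions_def)
lemma rep_part: "b > 0 \<Longrightarrow> replicate a b \<in> partitions"
  by (auto simp: partitions_def sorted_wrt_iff_nth_less)

lemma oo_part: "one_one \<in> partitions" by (simp add: one_one_def partitions_def)

lemma le_single: "young_le x [n] \<longleftrightarrow> x = [] \<or> (\<exists>m. x = [m] \<and> m \<le> n)"
  by (cases x) (auto simp: young_le_def)
lemma single_le: "young_le [n] x \<longleftrightarrow> x \<noteq> [] \<and> n \<le> hd x"
  by (cases x) (auto simp: young_le_def)

lemma part_len1: "y \<in> partitions \<Longrightarrow> \<not> young_le one_one y \<Longrightarrow> length y \<le> 1"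
proof (rule ccontr)
  assume y: "y \<in> partitions" "\<not> young_le one_one y" "\<not> length y \<le> 1"
  then have "0 < y!0" "0 < y!1" using part_pos[of y 0] part_pos[of y 1] by (auto, cases y, auto)
  then have "young_le one_one y" using y(3)
    by (auto simp: young_le_def one_one_def less_Suc_eq nth_Cons')
  then show False using y by simp
qed




lemma yl_len: "young_le x y \<Longrightarrow> length x \<le> length y" by (simp add: young_le_def)

lemma least_char: "expresses P Q \<Longrightarrow> a \<in> partitions \<Longrightarrow> Q a \<Longrightarrow> (\<forall>y\<in>partitions. Q y \<longrightarrow> young_le a y)
   \<Longrightarrow> expresses (least P) (\<lambda>x. x = a)"
  apply (erule expresses_cong[OF ex_least])
  using yl_antisym by blast

lemma greatest_char: "expresses P Q \<Longrightarrow> a \<in> partitions \<Longrightarrow> Q a \<Longrightarrow> (\<forall>y\<in>partitions. Q y \<longrightarrow> young_le y a)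
   \<Longrightarrow> expresses (greatest P) (\<lambda>x. x = a)"
  apply (erule expresses_cong[OF ex_greatest])
  using yl_antisym by blast

definition fbot :: fm where "fbot = least TT"
lemma ex_fbot: "expresses fbot (\<lambda>x. x = [])"
  unfolding fbot_def by (rule least_char[OF ex_TT]) auto

definition rowl :: "nat \<Rightarrow> nat list" where "rowl n = (if n = 0 then [] else [n])"

fun frow :: "nat \<Rightarrow> fm" where
  "frow 0 = fbot"
| "frow (Suc n) = least (FConj (FNeg gec) (FNeg (lo (frow n))))"

lemma rowl_part: "rowl n \<in> partitions" by (simp add: rowl_def)

lemma ex_frow: "expresses (frow n) (\<lambda>x. x = rowl n)"
proof (induction n)
  case 0
  then show ?case using ex_fbot by (simp add: rowl_def)
next
  case (Suc n)
  have E: "expresses (FConj (FNeg gec) (FNeg (lo (frow n))))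
      (\<lambda>x. \<not> young_le one_one x \<and> \<not> young_le x (rowl n))"
    by (rule ex_conj[OF ex_neg[OF ex_gec] ex_neg[OF ex_lo[OF Suc rowl_part]]])
  show ?case unfolding frow.simps
  proof (rule least_char[OF E])
    show "rowl (Suc n) \<in> partitions" by (rule rowl_part)
    show "\<not> young_le one_one (rowl (Suc n)) \<and> \<not> young_le (rowl (Suc n)) (rowl n)"
      by (auto simp: rowl_def one_one_def young_le_def)
    show "\<forall>y\<in>partitions. \<not> young_le one_one y \<and> \<not> young_le y (rowl n) \<longrightarrow> young_le (rowl (Suc n)) y"
    proof (intro ballI impI)
      fix y assume y: "y \<in> partitions" "\<not> young_le one_one y \<and> \<not> young_le y (rowl n)"
      then have "length y \<le> 1" using part_len1 by blast
      moreover have "y \<noteq> []" using y by auto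
      ultimately obtain m where m: "y = [m]" by (cases y) auto
      with y show "young_le (rowl (Suc n)) y"
        by (auto simp: rowl_def le_single single_le split: if_splits)
    qed
  qed
qed

definition fcol_step :: "fm \<Rightarrow> fm" where
  "fcol_step f = least (FConj (FNeg (go (frow 2))) (FNeg (lo f)))"

fun fcol :: "nat \<Rightarrow> fm" where
  "fcol 0 = fbot"
| "fcol (Suc n) = fcol_step (fcol n)"

lemma rep1_le: "y \<in> partitions \<Longrightarrow> young_le (replicate a (Suc 0)) y \<longleftrightarrow> a \<le> length y"
  using part_pos[of y] by (auto simp: young_le_def Suc_le_eq)

lemma not_ge2: "y \<in> partitions \<Longrightarrow> \<not> young_le [2] y \<Longrightarrow> y = replicate (length y) (Suc 0)"
proof (rule nth_equalityI)
  assume y: "y \<in> partitions" "\<not> young_le [2] y"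
  fix i assume i: "i < length y"
  then have "y ! 0 \<le> 1" using y by (cases y) (auto simp: single_le)
  moreover have "y!i \<le> y!0" using part_mono[OF y(1), of 0 i] i by simp
  moreover have "0 < y!i" using part_pos[OF y(1) i] .
  ultimately show "y ! i = replicate (length y) (Suc 0) ! i" using i by simp
qed simp

lemma ex_fcol: "expresses (fcol n) (\<lambda>x. x = replicate n (Suc 0))"
proof (induction n)
  case 0
  then show ?case using ex_fbot by simp
next
  case (Suc n)
  have r2: "rowl 2 = [2]" by (simp add: rowl_def)
  have E: "expresses (FConj (FNeg (go (frow 2))) (FNeg (lo (fcol n))))
      (\<lambda>x. \<not> young_le [2] x \<and> \<not> young_le x (replicate n (Suc 0)))"
    using ex_conj[OF ex_neg[OF ex_go[OF ex_frow[of 2] rowl_part[of 2]]] ex_neg[OF ex_lo[OF Suc rep_part]]]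
    by (simp add: r2)
  have rp: "replicate m (Suc 0) \<in> partitions" for m by (rule rep_part) simp
  show ?case unfolding fcol.simps fcol_step_def
  proof (rule least_char[OF E])
    show "replicate (Suc n) (Suc 0) \<in> partitions" by (rule rp)
    show "\<not> young_le [2] (replicate (Suc n) (Suc 0)) \<and> \<not> young_le (replicate (Suc n) (Suc 0)) (replicate n (Suc 0))"
      using yl_len[of "replicate (Suc n) (Suc 0)" "replicate n (Suc 0)"]
      by (simp add: single_le del: replicate.simps) blast
    show "\<forall>y\<in>partitions. \<not> young_le [2] y \<and> \<not> young_le y (replicate n (Suc 0)) \<longrightarrow> young_le (replicate (Suc n) (Suc 0)) y"
    proof (intro ballI impI)
      fix y assume y: "y \<in> partitions" "\<not> young_le [2] y \<and> \<not> young_le y (replicate n (Suc 0))"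
      then have "y = replicate (length y) (Suc 0)" using not_ge2 by blast
      with y have "\<not> length y \<le> n" using rep1_le[OF rp, of "length y" n] by (metis length_replicate)
      then show "young_le (replicate (Suc n) (Suc 0)) y" using rep1_le[OF y(1), of "Suc n"]
        by (simp del: replicate.simps)
    qed
  qed
qed

definition frect :: "nat \<Rightarrow> nat \<Rightarrow> fm" where
  "frect a b = greatest (FConj (FNeg (go (frow (Suc b)))) (FNeg (go (fcol (Suc a)))))"

lemma ex_frect: assumes b: "0 < b" shows "expresses (frect a b) (\<lambda>x. x = replicate a b)"
proof -
  have E: "expresses (FConj (FNeg (go (frow (Suc b)))) (FNeg (go (fcol (Suc a)))))
      (\<lambda>x. \<not> young_le [Suc b] x \<and> \<not> young_le (replicate (Suc a) (Suc 0)) x)"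
    using ex_conj[OF ex_neg[OF ex_go[OF ex_frow[of "Suc b"] rowl_part[of "Suc b"]]] ex_neg[OF ex_go[OF ex_fcol[of "Suc a"] rep_part[of "Suc 0" "Suc a"]]]]
    by (simp add: rowl_def del: frow.simps fcol.simps replicate.simps)
  show ?thesis unfolding frect_def
  proof (rule greatest_char[OF E])
    show "replicate a b \<in> partitions" using rep_part b by blast
    show "\<not> young_le [Suc b] (replicate a b) \<and> \<not> young_le (replicate (Suc a) (Suc 0)) (replicate a b)"
      using yl_len[of "replicate (Suc a) (Suc 0)" "replicate a b"] b
      by (cases a) (auto simp: single_le simp del: replicate.simps)
    show "\<forall>y\<in>partitions. \<not> young_le [Suc b] y \<and> \<not> young_le (replicate (Suc a) (Suc 0)) y \<longrightarrow> young_le y (replicate a b)"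
    proof (intro ballI impI)
      fix y assume y: "y \<in> partitions" "\<not> young_le [Suc b] y \<and> \<not> young_le (replicate (Suc a) (Suc 0)) y"
      then have la: "length y \<le> a" using rep1_le[OF y(1), of "Suc a"] by (simp del: replicate.simps)
      have "y!i \<le> b" if i: "i < length y" for i
      proof -
        have "y!0 \<le> b" using y i by (cases y) (auto simp: single_le)
        moreover have "y!i \<le> y!0" using part_mono[OF y(1), of 0 i] i by simp
        ultimately show ?thesis by simp
      qed
      then show "young_le y (replicate a b)" using la by (auto simp: young_le_def)
    qed
  qed
qed

definition fjoin :: "fm \<Rightarrow> fm \<Rightarrow> fm" where
  "fjoin \<phi> \<psi> = least (FConj (go \<phi>) (go \<psi>))"

fun fpr :: "nat list \<Rightarrow> fm" where
  "fpr [] = fbot"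
| "fpr (p # rs) = fjoin (frect (Suc (length rs)) p) (fpr rs)"

lemma part_butlast: "xs @ [x] \<in> partitions \<Longrightarrow> xs \<in> partitions \<and> 0 < x"
  by (auto simp: partitions_def sorted_wrt_append)

lemma ex_fpr: "\<pi> \<in> partitions \<Longrightarrow> expresses (fpr (rev \<pi>)) (\<lambda>x. x = \<pi>)"
proof (induction \<pi> rule: rev_induct)
  case Nil
  then show ?case using ex_fbot by simp
next
  case (snoc x xs)
  have xs: "xs \<in> partitions" and x: "0 < x" using part_butlast[OF snoc.prems] by auto
  let ?a = "replicate (Suc (length xs)) x"
  have E: "expresses (FConj (go (frect (Suc (length xs)) x)) (go (fpr (rev xs))))
      (\<lambda>y. young_le ?a y \<and> young_le xs y)"
    by (rule ex_conj[OF ex_go[OF ex_frect[OF x] rep_part[OF x]] ex_go[OF snoc.IH[OF xs] xs]])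
  have rv: "rev (xs @ [x]) = x # rev xs" by simp
  show ?case unfolding rv fpr.simps length_rev fjoin_def
  proof (rule least_char[OF E snoc.prems])
    have "young_le ?a (xs @ [x])"
      unfolding young_le_def
    proof (intro conjI allI impI)
      fix i assume "i < length ?a"
      then have "i < length (xs @ [x])" by simp
      then show "?a ! i \<le> (xs @ [x]) ! i"
        using part_mono[OF snoc.prems, of i "length xs"] by (simp add: nth_append del: replicate.simps)
    qed simp
    moreover have "young_le xs (xs @ [x])" by (simp add: young_le_def nth_append)
    ultimately show "young_le ?a (xs @ [x]) \<and> young_le xs (xs @ [x])" ..
    show "\<forall>y\<in>partitions. young_le ?a y \<and> young_le xs y \<longrightarrow> young_le (xs @ [x]) y"
    proof (intro ballI impI)
      fix y assume y: "young_le ?a y \<and> young_le xs y"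
      show "young_le (xs @ [x]) y" unfolding young_le_def
      proof (intro conjI allI impI)
        show "length (xs @ [x]) \<le> length y" using y by (simp add: young_le_def)
        fix i assume i: "i < length (xs @ [x])"
        show "(xs @ [x]) ! i \<le> y ! i"
        proof (cases "i < length xs")
          case True then show ?thesis using y by (simp add: young_le_def nth_append)
        next
          case False
          then have "i = length xs" using i by simp
          then show ?thesis using y unfolding young_le_def
            by (auto simp add: nth_append simp del: replicate.simps)
        qed
      qed
    qed
  qed
qed




definition pf :: "nat list \<Rightarrow> nat \<Rightarrow> nat" where
  "pf p i = (if i < length p then p!i else 0)"

lemma le_pf: assumes "x \<in> partitions" "y \<in> partitions"
  shows "young_le x y \<longleftrightarrow> (\<forall>i. pf x i \<le> pf y i)"
proof
  assume "young_le x y" then show "\<forall>i. pf x i \<le> pf y i"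
    by (auto simp: young_le_def pf_def)
next
  assume H: "\<forall>i. pf x i \<le> pf y i"
  have "length x \<le> length y"
  proof (rule ccontr)
    assume "\<not> length x \<le> length y"
    then have "0 < pf x (length y)" using part_pos[OF assms(1), of "length y"] by (simp add: pf_def)
    moreover have "pf y (length y) = 0" by (simp add: pf_def)
    ultimately show False using H[rule_format, of "length y"] by simp
  qed
  then show "young_le x y" using H unfolding young_le_def pf_def
    by (metis (full_types) order_less_le_trans)
qed

lemma pf_inj: "x \<in> partitions \<Longrightarrow> y \<in> partitions \<Longrightarrow> (\<forall>i. pf x i = pf y i) \<Longrightarrow> x = y"
  using le_pf[of x y] le_pf[of y x] yl_antisym by auto

definition hp :: "nat list \<Rightarrow> nat" where "hp p = (case p of [] \<Rightarrow> 0 | a # _ \<Rightarrow> a)"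

lemma hp_bound: "p \<in> partitions \<Longrightarrow> a \<in> set p \<Longrightarrow> a \<le> hp p"
  by (cases p) (auto simp: hp_def partitions_def)

lemma conj_eq: "conjugate p = map (\<lambda>j. length (filter (\<lambda>a. j < a) p)) [0..<hp p]"
  by (simp add: conjugate_def hp_def)

definition cnt :: "nat list \<Rightarrow> nat \<Rightarrow> nat" where "cnt p j = length (filter (\<lambda>a. j < a) p)"

lemma cnt_anti: "j \<le> j' \<Longrightarrow> cnt p j' \<le> cnt p j"
proof -
  assume "j \<le> j'"
  then have "filter (\<lambda>a. j' < a) p = filter (\<lambda>a. j' < a) (filter (\<lambda>a. j < a) p)"
    by (induct p) auto
  then show ?thesis unfolding cnt_def by (metis length_filter_le)
qed

lemma conj_part: assumes p: "p \<in> partitions" shows "conjugate p \<in> partitions"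
proof -
  have "sorted_wrt (\<ge>) (conjugate p)"
    unfolding conj_eq sorted_wrt_iff_nth_less
    using cnt_anti[unfolded cnt_def] by auto
  moreover have "0 < x" if xin: "x \<in> set (conjugate p)" for x
  proof -
    obtain j where j: "j < hp p" "x = cnt p j" using xin by (auto simp: conj_eq cnt_def)
    then obtain a l where pa: "p = a # l" by (cases p) (auto simp: hp_def)
    then have "j < a" using j by (simp add: hp_def)
    then show ?thesis using j pa by (simp add: cnt_def)
  qed
  ultimately show ?thesis by (simp add: partitions_def)
qed

lemma pf_conj: assumes p: "p \<in> partitions" shows "pf (conjugate p) j = cnt p j"
proof (cases "j < hp p")
  case True then show ?thesis by (simp add: pf_def conj_eq cnt_def)
next
  case False
  then have "filter (\<lambda>a. j < a) p = []" using hp_bound[OF p]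
    by (auto simp: filter_empty_conv) (meson leD le_trans not_le_imp_less)
  then show ?thesis using False by (simp add: pf_def conj_eq cnt_def)
qed

lemma cnt_card: "cnt p j = card {i. j < pf p i}"
proof -
  have "{i. j < pf p i} = {i. i < length p \<and> j < p ! i}" by (auto simp: pf_def split: if_splits)
  then show ?thesis by (simp add: cnt_def length_filter_conv_card)
qed

lemma pf_anti: "p \<in> partitions \<Longrightarrow> k' \<le> k \<Longrightarrow> pf p k \<le> pf p k'"
  using part_mono[of p k' k] by (auto simp: pf_def)

lemma fin_S: "finite {k. j < pf p k}"
  by (rule finite_subset[of _ "{..<length p}"]) (auto simp: pf_def split: if_splits)

lemma down_card: assumes p: "p \<in> partitions" shows "i < card {k. j < pf p k} \<longleftrightarrow> j < pf p i"
proof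
  assume "i < card {k. j < pf p k}"
  show "j < pf p i"
  proof (rule ccontr)
    assume "\<not> j < pf p i"
    then have "{k. j < pf p k} \<subseteq> {..<i}"
      using pf_anti[OF p] by (auto simp: not_less) (meson le_trans not_le)
    then have "card {k. j < pf p k} \<le> i" using card_mono[of "{..<i}"] by fastforce
    then show False using \<open>i < card _\<close> by simp
  qed
next
  assume "j < pf p i"
  then have "{..i} \<subseteq> {k. j < pf p k}" using pf_anti[OF p] by (auto intro: less_le_trans)
  then have "card {..i} \<le> card {k. j < pf p k}" using card_mono[OF fin_S] by blast
  then show "i < card {k. j < pf p k}" by simp
qed

lemma conj_conj: assumes p: "p \<in> partitions" shows "conjugate (conjugate p) = p"
proof (rule pf_inj[OF conj_part[OF conj_part[OF p]] p], rule allI)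
  fix i
  have "pf (conjugate (conjugate p)) i = card {j. i < pf (conjugate p) j}"
    using pf_conj[OF conj_part[OF p]] cnt_card by simp
  also have "\<dots> = card {j. i < card {k. j < pf p k}}"
    using pf_conj[OF p] cnt_card by simp
  also have "\<dots> = card {j. j < pf p i}" using down_card[OF p] by simp
  finally show "pf (conjugate (conjugate p)) i = pf p i" by simp
qed

lemma conj_mono: assumes x: "x \<in> partitions" and y: "y \<in> partitions" and le: "young_le x y"
  shows "young_le (conjugate x) (conjugate y)"
proof -
  have "\<forall>i. pf x i \<le> pf y i" using le_pf[OF x y] le by simp
  then have "card {i. j < pf x i} \<le> card {i. j < pf y i}" for j
    by (intro card_mono[OF fin_S]) (auto intro: less_le_trans)
  then show ?thesis using le_pf[OF conj_part[OF x] conj_part[OF y]] pf_conj[OF x] pf_conj[OF y] cnt_card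
    by simp
qed

lemma aut_conj: "young_aut conjugate"
  unfolding young_aut_def
proof (intro conjI ballI)
  show "bij_betw conjugate partitions partitions"
    by (rule bij_betw_byWitness[where f'=conjugate]) (auto simp: conj_conj conj_part)
  fix x y assume x: "x \<in> partitions" and y: "y \<in> partitions"
  show "young_le x y \<longleftrightarrow> young_le (conjugate x) (conjugate y)"
    using conj_mono[OF x y] conj_mono[OF conj_part[OF x] conj_part[OF y]] conj_conj[OF x] conj_conj[OF y]
    by auto
qed




fun hc_t :: "trm \<Rightarrow> bool" where "hc_t (Var v) = False" | "hc_t Cst = True"
fun has_cst :: "fm \<Rightarrow> bool" where
  "has_cst (FLe s t) = (hc_t s \<or> hc_t t)"
| "has_cst (FEq s t) = (hc_t s \<or> hc_t t)"
| "has_cst (FNeg f) = has_cst f"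
| "has_cst (FConj f g) = (has_cst f \<or> has_cst g)"
| "has_cst (FEx v f) = has_cst f"

lemma trm_part: "valid e \<Longrightarrow> trm_eval e t \<in> partitions"
  by (cases t) (auto simp: valid_def oo_part)

lemma trm_aut: "(hc_t t \<longrightarrow> f one_one = one_one) \<Longrightarrow> trm_eval (f \<circ> e) t = f (trm_eval e t)"
  by (cases t) auto

lemma aut_maps: "young_aut f \<Longrightarrow> x \<in> partitions \<Longrightarrow> f x \<in> partitions"
  unfolding young_aut_def bij_betw_def by auto

lemma aut_valid: "young_aut f \<Longrightarrow> valid e \<Longrightarrow> valid (f \<circ> e)"
  using aut_maps by (auto simp: valid_def)

lemma aut_sat: "young_aut f \<Longrightarrow> (has_cst \<phi> \<longrightarrow> f one_one = one_one) \<Longrightarrow> valid e \<Longrightarrow>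
  sat (f \<circ> e) \<phi> = sat e \<phi>"
proof (induction \<phi> arbitrary: e)
  case (FLe s t)
  have ts: "trm_eval (f \<circ> e) s = f (trm_eval e s)" "trm_eval (f \<circ> e) t = f (trm_eval e t)"
    using trm_aut FLe.prems(2) by auto
  show ?case unfolding sat.simps ts
    using trm_part[OF FLe.prems(3), of s] trm_part[OF FLe.prems(3), of t] FLe.prems(1)
    by (simp add: young_aut_def)
next
  case (FEq s t)
  have ts: "trm_eval (f \<circ> e) s = f (trm_eval e s)" "trm_eval (f \<circ> e) t = f (trm_eval e t)"
    using trm_aut FEq.prems(2) by auto
  have inj: "inj_on f partitions" using FEq.prems(1) by (simp add: young_aut_def bij_betw_def)
  show ?case unfolding sat.simps ts
    using trm_part[OF FEq.prems(3), of s] trm_part[OF FEq.prems(3), of t] inj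
    by (auto dest: inj_onD)
next
  case (FNeg \<phi>)
  then show ?case by simp
next
  case (FConj \<phi>1 \<phi>2)
  then show ?case by simp
next
  case (FEx v \<phi>)
  have surj: "f ` partitions = partitions" using FEx.prems(1) by (simp add: young_aut_def bij_betw_def)
  have "sat (f \<circ> e) (FEx v \<phi>) \<longleftrightarrow> (\<exists>p\<in>partitions. sat ((f \<circ> e)(v := p)) \<phi>)" by simp
  also have "\<dots> \<longleftrightarrow> (\<exists>q\<in>partitions. sat ((f \<circ> e)(v := f q)) \<phi>)" using surj by (metis imageE imageI)
  also have "\<dots> \<longleftrightarrow> (\<exists>q\<in>partitions. sat (f \<circ> (e(v := q))) \<phi>)"
    by (simp add: fun_upd_comp)
  also have "\<dots> \<longleftrightarrow> (\<exists>q\<in>partitions. sat (e(v := q)) \<phi>)"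
  proof -
    have "\<forall>q\<in>partitions. sat (f \<circ> (e(v := q))) \<phi> = sat (e(v := q)) \<phi>"
    proof
      fix q assume q: "q \<in> partitions"
      then have vq: "valid (e(v:=q))" using FEx.prems(3) by simp
      show "sat (f \<circ> (e(v := q))) \<phi> = sat (e(v := q)) \<phi>"
        by (rule FEx.IH[OF FEx.prems(1) _ vq]) (use FEx.prems(2) in simp)
    qed
    then show ?thesis by auto
  qed
  also have "\<dots> \<longleftrightarrow> sat e (FEx v \<phi>)" by simp
  finally show ?case .
qed

definition f1 :: fm where "f1 = least (FNeg (lo fbot))"
definition f2 :: fm where "f2 = minimal (FNeg (lo f1))"

lemma ex_f1: "expresses f1 (\<lambda>x. x = [1])"
  unfolding f1_def
proof (rule least_char[OF ex_neg[OF ex_lo[OF ex_fbot nil_part]]])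
  show "\<forall>y\<in>partitions. \<not> young_le y [] \<longrightarrow> young_le [1] y"
  proof (intro ballI impI)
    fix y assume y: "y \<in> partitions" "\<not> young_le y []"
    then show "young_le [1] y" using part_pos[OF y(1), of 0] by (cases y) (auto simp: single_le)
  qed
qed auto

lemma two_char: assumes x: "x \<in> partitions"
  shows "(\<not> young_le x [1] \<and> (\<forall>y\<in>partitions. \<not> young_le y [1] \<and> young_le y x \<longrightarrow> y = x))
     \<longleftrightarrow> x = [2] \<or> x = [1,1]"
proof
  assume H: "\<not> young_le x [1] \<and> (\<forall>y\<in>partitions. \<not> young_le y [1] \<and> young_le y x \<longrightarrow> y = x)"
  then have H1: "\<not> young_le x [1]" and H2: "\<And>y. y \<in> partitions \<Longrightarrow> \<not> young_le y [1] \<Longrightarrow> young_le y x \<Longrightarrow> y = x"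
    by blast+
  have ne: "x \<noteq> []" using H1 by (metis nil_le)
  then obtain a l where xa: "x = a # l" by (cases x) auto
  show "x = [2] \<or> x = [1,1]"
  proof (cases "2 \<le> a")
    case True
    then have "young_le [2] x" using xa by (simp add: single_le)
    moreover have "\<not> young_le [2] [1]" by (simp add: le_single)
    ultimately have "[2] = x" using H2[of "[2]"] by simp
    then show ?thesis by simp
  next
    case False
    have "0 < a" using part_pos[OF x, of 0] xa by simp
    with False have a1: "a = 1" by simp
    have "l \<noteq> []"
    proof
      assume "l = []"
      then have "young_le x [1]" using xa a1 by (simp add: le_single)
      then show False using H1 by simp
    qed
    then obtain b l' where lb: "l = b # l'" by (cases l) auto
    have "0 < b" using part_pos[OF x, of 1] xa lb by simp
    then have "young_le [1,1] x" using xa lb a1 by (auto simp: young_le_def less_Suc_eq nth_Cons')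
    moreover have "\<not> young_le [1,1] [1]" by (simp add: young_le_def)
    moreover have "[1,1] \<in> partitions" using oo_part by (simp add: one_one_def)
    ultimately have "[1,1] = x" using H2[of "[1,1]"] by blast
    then show ?thesis by simp
  qed
next
  assume "x = [2] \<or> x = [1,1]"
  then show "\<not> young_le x [1] \<and> (\<forall>y\<in>partitions. \<not> young_le y [1] \<and> young_le y x \<longrightarrow> y = x)"
  proof
    assume x2: "x = [2]"
    show ?thesis unfolding x2
    proof (intro conjI ballI impI)
      show "\<not> young_le [2] [1]" by (simp add: le_single)
      fix y assume "y \<in> partitions" "\<not> young_le y [1] \<and> young_le y [2]"
      then show "y = [2]" by (auto simp: le_single)
    qed
  next
    assume x2: "x = [1,1]"
    show ?thesis unfolding x2
    proof (intro conjI ballI impI)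
      show "\<not> young_le [1,1] [1]" by (simp add: young_le_def)
      fix y assume y: "y \<in> partitions" "\<not> young_le y [1] \<and> young_le y [1,1]"
      have ne: "y \<noteq> []" using y by (metis nil_le)
      have l2: "length y \<le> 2" using y by (simp add: young_le_def)
      have "\<forall>i<length y. y!i \<le> [1,1]!i" using y by (simp add: young_le_def)
      then have "y!0 \<le> [1,1]!0" using ne by blast
      then have y0: "y!0 \<le> 1" by simp
      have yi: "y!i = 1" if i: "i < length y" for i
      proof -
        have "y!i \<le> y!0" by (rule part_mono[OF y(1)]) (simp_all add: i)
        then show ?thesis using y0 part_pos[OF y(1) i] by simp
      qed
      show "y = [1,1]"
      proof (cases "length y = 2")
        case True
        show ?thesis
        proof (rule nth_equalityI)
          show "length y = length [1,1]" using True by simp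
          fix i assume i: "i < length y"
          then have "i = 0 \<or> i = 1" using True by linarith
          then show "y ! i = [1,1] ! i" using yi[OF i] by auto
        qed
      next
        case False
        then have l1: "length y \<le> 1" using l2 by linarith
        have "young_le y [1]" unfolding young_le_def
        proof (intro conjI allI impI)
          show "length y \<le> length [1]" using l1 by simp
          fix i assume i: "i < length y"
          then have "i = 0" using l1 by linarith
          then show "y ! i \<le> [1] ! i" using yi[OF i] by simp
        qed
        then show ?thesis using y by simp
      qed
    qed
  qed
qed

lemma ex_f2: "expresses f2 (\<lambda>x. x = [2] \<or> x = [1,1])"
  unfolding f2_def
  by (rule expresses_cong[OF ex_minimal[OF ex_neg[OF ex_lo[OF ex_f1]]]], simp, rule two_char)

lemma f2_nc: "\<not> has_cst f2"
  by (simp add: f2_def f1_def minimal_def least_def lo_def fat_def fbot_def TT_def FAll_def FImp_def)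

lemma fix_all: assumes f: "young_aut f" and c: "f one_one = one_one"
  shows "\<forall>x\<in>partitions. f x = x"
proof
  fix x assume x: "x \<in> partitions"
  let ?e = "\<lambda>_::nat. x"
  have v: "valid ?e" using x by (simp add: valid_def)
  have E: "expresses (fpr (rev x)) (\<lambda>y. y = x)" by (rule ex_fpr[OF x])
  then have "sat ?e (fpr (rev x))" using v by (simp add: expresses_def)
  then have "sat (f \<circ> ?e) (fpr (rev x))" using aut_sat[OF f _ v] c by simp
  then show "f x = x" using E aut_valid[OF f v] by (simp add: expresses_def)
qed

lemma aut_comp: "young_aut f \<Longrightarrow> young_aut g \<Longrightarrow> young_aut (g \<circ> f)"
proof -
  assume f: "young_aut f" and g: "young_aut g"
  show ?thesis unfolding young_aut_def
  proof (intro conjI ballI)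
    show "bij_betw (g \<circ> f) partitions partitions"
      using f g unfolding young_aut_def by (blast intro: bij_betw_trans)
    fix x y assume x: "x \<in> partitions" and y: "y \<in> partitions"
    show "young_le x y = young_le ((g \<circ> f) x) ((g \<circ> f) y)"
      using f g aut_maps[OF f x] aut_maps[OF f y] x y unfolding young_aut_def by simp
  qed
qed

lemma conj2: "conjugate [2] = [1,1]" by (simp add: conjugate_def upt_rec)

theorem proposition3p3:
  shows "(\<forall>\<pi>\<in>partitions. \<exists>\<phi>. free_vars \<phi> \<subseteq> {0} \<and>
            (\<forall>e. (\<forall>v. e v \<in> partitions) \<longrightarrow> (sat e \<phi> \<longleftrightarrow> e 0 = \<pi>)))
       \<and> young_aut conjugate
       \<and> (\<exists>x\<in>partitions. conjugate x \<noteq> x)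
       \<and> (\<forall>f. young_aut f \<longrightarrow> (\<forall>x\<in>partitions. f x = x) \<or> (\<forall>x\<in>partitions. f x = conjugate x))"
proof (intro conjI allI impI ballI)
  fix \<pi> assume "\<pi> \<in> partitions"
  from ex_fpr[OF this] show "\<exists>\<phi>. free_vars \<phi> \<subseteq> {0} \<and>
            (\<forall>e. (\<forall>v. e v \<in> partitions) \<longrightarrow> (sat e \<phi> \<longleftrightarrow> e 0 = \<pi>))"
    unfolding expresses_def valid_def by blast
next
  show "young_aut conjugate" by (rule aut_conj)
next
  show "\<exists>x\<in>partitions. conjugate x \<noteq> x"
    by (rule bexI[of _ "[2]"]) (auto simp: conj2)
next
  fix f assume f: "young_aut f"
  let ?e = "\<lambda>_::nat. one_one"
  have v: "valid ?e" using oo_part by (simp add: valid_def)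
  have "sat ?e f2" using ex_f2 v by (simp add: expresses_def one_one_def)
  then have "sat (f \<circ> ?e) f2" using aut_sat[OF f _ v] f2_nc by simp
  then have "f one_one = [2] \<or> f one_one = [1,1]" using ex_f2 aut_valid[OF f v] by (simp add: expresses_def)
  then show "(\<forall>x\<in>partitions. f x = x) \<or> (\<forall>x\<in>partitions. f x = conjugate x)"
  proof
    assume "f one_one = [1,1]"
    then show ?thesis using fix_all[OF f] by (simp add: one_one_def)
  next
    assume f2: "f one_one = [2]"
    have "\<forall>x\<in>partitions. (conjugate \<circ> f) x = x"
      by (rule fix_all[OF aut_comp[OF f aut_conj]]) (simp add: f2 conj2, simp add: one_one_def)
    then have "\<forall>x\<in>partitions. f x = conjugate x"
      using conj_conj aut_maps[OF f] by (metis comp_apply)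
    then show ?thesis by blast
  qed
qed


end
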